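(* In the setting of Top Half Sampling, run with an optimal Natural LP solution $(x_{ij})$ of value $\textsc{Opt}$ on an edge-weighted instance with free disposal, define $\bar A(t)=\textsc{Opt}-A(t)$, where $A(t)$ is the algorithm's objective right before time $t$. Then \[ \frac{d}{dt}\mathbf{E}\,\bar A(t)\Big|_{t=0}\le -\textsc{Opt}. \]
   Context: Poisson arrival model: $I$ is a finite set of online types and $J$ a finite set of offline vertices, with edges $E$, $J_i$ the neighbors of type $i$, and weights $w_{ij}>0$. Type $i$ arrives by an independent Poisson process of rate $\lambda_i>0$ on $[0,1]$. Under free disposal only the heaviest edge matched to each offline vertex counts. Natural LP: maximize $\sum w_{ij}x_{ij}$ subject to $x\ge0$, $\sum_{j\in J_i}x_{ij}\le\lambda_i$, and $\sum_{i\in S}x_{ij}\le 1-e^{-\sum_{i\in S}\lambda_i}$ for all $j$ and all $S$ of neighbors of $j$. Top Half Sampling: with $w_j(t)$ the max weight matched to $j$ before $t$ ($0$ if none) and $w_{ij}(t)=\max\{w_{ij}-w_j(t),0\}$, order $J_i$ by non-increasing $w_{ij}(t)$. Let $\sigma_{i,t}(\theta)$ be the neighbor whose cumulative $x_{ij}$-interval in this order contains $\theta$, and $\perp$ (unmatched) if $\theta\ge\sum_jx_{ij}$. A type-$i$ arrival at time $t$ samples $\theta\sim U[0,\lambda_i/2)$ and is matched to $\sigma_{i,t}(\theta)$. *)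

theory Defs
  imports "HOL-Analysis.Analysis"
begin

definition nbrs :: "('i \<times> 'j) set \<Rightarrow> 'i \<Rightarrow> 'j set" where
  "nbrs E i = {j. (i, j) \<in> E}"

definition lp_feasible ::
  "'i set \<Rightarrow> 'j set \<Rightarrow> ('i \<times> 'j) set \<Rightarrow> ('i \<Rightarrow> real) \<Rightarrow> ('i \<Rightarrow> 'j \<Rightarrow> real) \<Rightarrow> bool" where
  "lp_feasible I J E lam x \<longleftrightarrow>
     (\<forall>(i, j) \<in> E. 0 \<le> x i j) \<and>
     (\<forall>i \<in> I. (\<Sum>j \<in> nbrs E i. x i j) \<le> lam i) \<and>
     (\<forall>j \<in> J. \<forall>S. S \<subseteq> {i. (i, j) \<in> E} \<longrightarrow>
        (\<Sum>i \<in> S. x i j) \<le> 1 - exp (- (\<Sum>i \<in> S. lam i)))"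

definition lp_value :: "('i \<times> 'j) set \<Rightarrow> ('i \<Rightarrow> 'j \<Rightarrow> real) \<Rightarrow> ('i \<Rightarrow> 'j \<Rightarrow> real) \<Rightarrow> real" where
  "lp_value E w x = (\<Sum>(i, j) \<in> E. w i j * x i j)"

definition lp_optimal ::
  "'i set \<Rightarrow> 'j set \<Rightarrow> ('i \<times> 'j) set \<Rightarrow> ('i \<Rightarrow> real) \<Rightarrow> ('i \<Rightarrow> 'j \<Rightarrow> real) \<Rightarrow> ('i \<Rightarrow> 'j \<Rightarrow> real) \<Rightarrow> bool" where
  "lp_optimal I J E lam w x \<longleftrightarrow> lp_feasible I J E lam x \<and>
     (\<forall>y. lp_feasible I J E lam y \<longrightarrow> lp_value E w y \<le> lp_value E w x)"

text \<open>A state is the function st with st j = w_j(t), the heaviest weight matched to j so far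
  (0 if none).  Under free disposal the objective of a state is the sum of these.\<close>

definition gain :: "('i \<Rightarrow> 'j \<Rightarrow> real) \<Rightarrow> ('j \<Rightarrow> real) \<Rightarrow> 'i \<Rightarrow> 'j \<Rightarrow> real" where
  "gain w st i j = max (w i j - st j) 0"

text \<open>An ordering rule (tie-breaking arbitrary): for each type i and state, a list enumerating
  the neighbours J_i exactly once, in non-increasing order of the reduced weights w_ij(t).\<close>

definition valid_order ::
  "'i set \<Rightarrow> ('i \<times> 'j) set \<Rightarrow> ('i \<Rightarrow> 'j \<Rightarrow> real) \<Rightarrow> ('i \<Rightarrow> ('j \<Rightarrow> real) \<Rightarrow> 'j list) \<Rightarrow> bool" where
  "valid_order I E w ord \<longleftrightarrow>
     (\<forall>i \<in> I. \<forall>st. distinct (ord i st) \<and> set (ord i st) = nbrs E i \<and>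
        sorted_wrt (\<lambda>a b. gain w st i b \<le> gain w st i a) (ord i st))"

text \<open>sel x i L theta: the element of L whose cumulative x_ij-interval (in the order of L)
  contains theta; None (unmatched) if theta is beyond the total mass.\<close>

fun sel :: "('i \<Rightarrow> 'j \<Rightarrow> real) \<Rightarrow> 'i \<Rightarrow> 'j list \<Rightarrow> real \<Rightarrow> 'j option" where
  "sel x i [] \<theta> = None"
| "sel x i (j # js) \<theta> = (if \<theta> < x i j then Some j else sel x i js (\<theta> - x i j))"

definition sigma ::
  "('i \<Rightarrow> 'j \<Rightarrow> real) \<Rightarrow> ('i \<Rightarrow> ('j \<Rightarrow> real) \<Rightarrow> 'j list) \<Rightarrow> 'i \<Rightarrow> ('j \<Rightarrow> real) \<Rightarrow> real \<Rightarrow> 'j option" where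
  "sigma x ord i st \<theta> = sel x i (ord i st) \<theta>"

text \<open>Effect of one arrival of type i with sample theta (free disposal: only the heaviest
  matched edge counts).\<close>

definition ths_step ::
  "('i \<Rightarrow> 'j \<Rightarrow> real) \<Rightarrow> ('i \<Rightarrow> 'j \<Rightarrow> real) \<Rightarrow> ('i \<Rightarrow> ('j \<Rightarrow> real) \<Rightarrow> 'j list) \<Rightarrow>
     ('j \<Rightarrow> real) \<Rightarrow> 'i \<Rightarrow> real \<Rightarrow> ('j \<Rightarrow> real)" where
  "ths_step w x ord st i \<theta> =
     (case sigma x ord i st \<theta> of None \<Rightarrow> st | Some j \<Rightarrow> st(j := max (st j) (w i j)))"

text \<open>ths_V ... n st: expected objective after n further arrivals starting from state st,
  where each arrival is independently of type i with probability lam i / Lambda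
  (Lambda = total rate) and samples theta uniformly from [0, lam i / 2).\<close>

primrec ths_V ::
  "'i set \<Rightarrow> 'j set \<Rightarrow> ('i \<Rightarrow> real) \<Rightarrow> ('i \<Rightarrow> 'j \<Rightarrow> real) \<Rightarrow> ('i \<Rightarrow> 'j \<Rightarrow> real) \<Rightarrow>
     ('i \<Rightarrow> ('j \<Rightarrow> real) \<Rightarrow> 'j list) \<Rightarrow> nat \<Rightarrow> ('j \<Rightarrow> real) \<Rightarrow> real" where
  "ths_V I J lam w x ord 0 st = (\<Sum>j \<in> J. st j)"
| "ths_V I J lam w x ord (Suc n) st =
     (\<Sum>i \<in> I. (lam i / (\<Sum>k \<in> I. lam k)) *
        (integral {0..lam i / 2} (\<lambda>\<theta>. ths_V I J lam w x ord n (ths_step w x ord st i \<theta>)) / (lam i / 2)))"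

text \<open>Expected objective A(t) right before time t: the arrivals in [0,t) form a Poisson number
  (mean Lambda * t) of independent arrivals with i.i.d. types (superposition of the independent
  Poisson processes of rates lam i), processed in order starting from the empty matching.\<close>

definition ths_expected_A ::
  "'i set \<Rightarrow> 'j set \<Rightarrow> ('i \<Rightarrow> real) \<Rightarrow> ('i \<Rightarrow> 'j \<Rightarrow> real) \<Rightarrow> ('i \<Rightarrow> 'j \<Rightarrow> real) \<Rightarrow>
     ('i \<Rightarrow> ('j \<Rightarrow> real) \<Rightarrow> 'j list) \<Rightarrow> real \<Rightarrow> real" where
  "ths_expected_A I J lam w x ord t =
     (let \<Lambda> = (\<Sum>k \<in> I. lam k) in
      (\<Sum>n. exp (- \<Lambda> * t) * (\<Lambda> * t) ^ n / fact n * ths_V I J lam w x ord n (\<lambda>_. 0)))"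

end

theory Submission
  imports Defs
begin


definition FL :: "('i \<Rightarrow> 'j \<Rightarrow> real) \<Rightarrow> 'i \<Rightarrow> ('j \<Rightarrow> real) \<Rightarrow> 'j list \<Rightarrow> real \<Rightarrow> real" where
  "FL x i v L \<theta> = (case sel x i L \<theta> of None \<Rightarrow> 0 | Some j \<Rightarrow> v j)"

lemma sel_in: "sel x i L \<theta> = Some j \<Longrightarrow> j \<in> set L"
  by (induction L arbitrary: \<theta>) (auto split: if_splits)

lemma FL_cons: "FL x i v (j # js) \<theta> = (if \<theta> < x i j then v j else FL x i v js (\<theta> - x i j))"
  by (simp add: FL_def)

lemma W_le:
  fixes x :: "'i \<Rightarrow> 'j \<Rightarrow> real"
  assumes "\<forall>j\<in>set L. 0 \<le> x i j" "\<forall>j\<in>set L. v j \<le> m"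
  shows "(\<Sum>j\<leftarrow>L. v j * x i j) \<le> m * (\<Sum>j\<leftarrow>L. x i j)"
  using assms
proof (induction L)
  case Nil then show ?case by auto
next
  case (Cons a L)
  have "v a * x i a \<le> m * x i a" using Cons.prems by (simp add: mult_right_mono)
  then show ?case using Cons by (simp add: distrib_left)
qed

lemma FL_integral:
  assumes "\<forall>j\<in>set L. 0 \<le> x i j" "\<forall>j\<in>set L. 0 \<le> v j"
    and "sorted_wrt (\<lambda>a b. v b \<le> v a) L" and "0 \<le> a"
  shows "\<exists>Ig. (FL x i v L has_integral Ig) {0..a} \<and> 0 \<le> Ig \<and>
     min a (\<Sum>j\<leftarrow>L. x i j) * (\<Sum>j\<leftarrow>L. v j * x i j) \<le> (\<Sum>j\<leftarrow>L. x i j) * Ig"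
  using assms
proof (induction L arbitrary: a)
  case Nil
  have "FL x i v [] = (\<lambda>_. 0)" by (simp add: fun_eq_iff FL_def)
  then show ?case by (intro exI[of _ 0]) auto
next
  case (Cons j js)
  define S' where "S' = (\<Sum>j\<leftarrow>js. x i j)"
  define W' where "W' = (\<Sum>j\<leftarrow>js. v j * x i j)"
  have xj: "0 \<le> x i j" and vj: "0 \<le> v j" using Cons.prems by auto
  have S'0: "0 \<le> S'" unfolding S'_def using Cons.prems(1) by (intro sum_list_nonneg) auto
  have W'0: "0 \<le> W'" unfolding W'_def using Cons.prems(1,2) by (intro sum_list_nonneg) auto
  have W'le: "W' \<le> v j * S'" unfolding W'_def S'_def
    using Cons.prems by (intro W_le) auto
  show ?case
  proof (cases "a \<le> x i j")
    case True
    have "((\<lambda>_. v j) has_integral (a * v j)) {0..a}"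
      using has_integral_const_real[of "v j" 0 a] Cons.prems(4) by simp
    then have "(FL x i v (j # js) has_integral (a * v j)) {0..a}"
      by (rule has_integral_spike_finite[where S="{a}", rotated 2]) (use True in \<open>auto simp: FL_cons\<close>)
    moreover have "min a (x i j + S') * (v j * x i j + W') \<le> (x i j + S') * (a * v j)"
    proof -
      have "min a (x i j + S') = a" using True S'0 by simp
      moreover have "a * (v j * x i j + W') \<le> a * (v j * (x i j + S'))"
        using W'le Cons.prems(4) by (intro mult_left_mono) (auto simp: algebra_simps)
      ultimately show ?thesis by (simp add: algebra_simps)
    qed
    ultimately show ?thesis using vj Cons.prems(4) unfolding S'_def W'_def
      by (intro exI[of _ "a * v j"]) auto
  next
    case False
    obtain I' where I': "(FL x i v js has_integral I') {0..a - x i j}" "0 \<le> I'"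
      "min (a - x i j) S' * W' \<le> S' * I'"
      using Cons.IH[of "a - x i j"] Cons.prems False unfolding S'_def W'_def by auto
    have "((\<lambda>_. v j) has_integral (x i j * v j)) {0..x i j}"
      using has_integral_const_real[of "v j" 0 "x i j"] xj by simp
    then have i1: "(FL x i v (j # js) has_integral (x i j * v j)) {0..x i j}"
      by (rule has_integral_spike_finite[where S="{x i j}", rotated 2]) (auto simp: FL_cons)
    have "((\<lambda>\<theta>. FL x i v js (\<theta> - x i j)) \<circ> (+) (x i j) has_integral I') {0..a - x i j}"
      using I'(1) by (simp add: o_def)
    then have "((\<lambda>\<theta>. FL x i v js (\<theta> - x i j)) has_integral I') {x i j..a}"
      unfolding has_integral_shift_Icc_real by simp
    then have i2: "(FL x i v (j # js) has_integral I') {x i j..a}"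
      by (rule has_integral_spike_finite[where S="{x i j}", rotated 2]) (auto simp: FL_cons)
    have tot: "(FL x i v (j # js) has_integral (x i j * v j + I')) {0..a}"
      using has_integral_combine[OF xj _ i1 i2] False by simp
    have key: "min a (x i j + S') * (v j * x i j + W') \<le> (x i j + S') * (x i j * v j + I')"
    proof (cases "x i j + S' \<le> a")
      case True
      then have m: "min (a - x i j) S' = S'" by simp
      have "W' \<le> I'"
      proof (cases "S' = 0")
        case True then show ?thesis using W'le I'(2) by simp
      next
        case False
        then have "S' * W' \<le> S' * I'" using I'(3) m by simp
        then show ?thesis using False S'0 by (simp add: mult_le_cancel_left)
      qed
      have "(x i j + S') * W' \<le> (x i j + S') * I'"
        using \<open>W' \<le> I'\<close> xj S'0 by (intro mult_left_mono) auto
      then show ?thesis using True xj S'0 vj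
        by (simp add: algebra_simps)
    next
      case nle: False
      then have m: "min (a - x i j) S' = a - x i j" "min a (x i j + S') = a" by auto
      have Sp: "0 < S'" using nle False by simp
      have I'ge: "(a - x i j) * W' / S' \<le> I'" using I'(3) m Sp
        by (simp add: pos_divide_le_eq mult.commute)
      define u where "u = W' / S'"
      have W'u: "W' = u * S'" using Sp unfolding u_def by simp
      have ule: "u \<le> v j" using W'le Sp unfolding u_def by (simp add: divide_le_eq mult.commute)
      have I'ge2: "(a - x i j) * u \<le> I'" using I'ge unfolding u_def by simp
      have "(x i j + S') * (x i j * v j + I') \<ge> (x i j + S') * (x i j * v j + (a - x i j) * u)"
        using I'ge2 xj S'0 by (intro mult_left_mono) auto
      moreover have "(x i j + S') * (x i j * v j + (a - x i j) * u) - a * (v j * x i j + W')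
           = x i j * (x i j + S' - a) * (v j - u)"
        unfolding W'u by (simp add: algebra_simps)
      moreover have "0 \<le> x i j * (x i j + S' - a) * (v j - u)"
        using xj nle ule by simp
      ultimately show ?thesis using m by simp
    qed
    show ?thesis using tot key vj xj I'(2) unfolding S'_def W'_def
      by (intro exI[of _ "x i j * v j + I'"]) simp
  qed
qed



lemma integral_bounds:
  fixes f :: "real \<Rightarrow> real"
  assumes "0 \<le> c" "\<And>t. t \<in> {0..c} \<Longrightarrow> 0 \<le> f t \<and> f t \<le> B"
  shows "0 \<le> integral {0..c} f \<and> integral {0..c} f \<le> c * B"
proof (cases "f integrable_on {0..c}")
  case True
  have "integral {0..c} f \<le> integral {0..c} (\<lambda>_. B)"
    using True assms by (intro integral_le) auto
  moreover have "0 \<le> integral {0..c} f" using True assms by (intro integral_nonneg) auto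
  moreover have "integral {0..c} (\<lambda>_. B) = c * B" using assms(1) by simp
  ultimately show ?thesis using assms(1) by (simp del: integral_const_real)
next
  case False
  have "0 \<le> B" using assms(2)[of 0] assms(1) by auto
  then show ?thesis using False assms(1) by (simp add: not_integrable_integral)
qed

lemma step_inv:
  assumes "E \<subseteq> I \<times> J" "valid_order I E w ord" "\<forall>(i, j)\<in>E. w i j \<le> M"
    "\<forall>j. 0 \<le> st j \<and> st j \<le> M" "i \<in> I"
  shows "\<forall>j. 0 \<le> ths_step w x ord st i \<theta> j \<and> ths_step w x ord st i \<theta> j \<le> M"
proof (cases "sigma x ord i st \<theta>")
  case None then show ?thesis using assms(4) by (simp add: ths_step_def)
next
  case (Some j)
  then have "j \<in> set (ord i st)" unfolding sigma_def by (rule sel_in)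
  moreover have "set (ord i st) = nbrs E i" using assms(2,5) unfolding valid_order_def by blast
  ultimately have "(i, j) \<in> E" by (simp add: nbrs_def)
  then have "w i j \<le> M" using assms(3) by auto
  moreover have "0 \<le> st j" using assms(4) by auto
  ultimately show ?thesis using Some assms(4) by (auto simp: ths_step_def le_max_iff_disj)
qed

lemma V_bound:
  fixes M :: real and w x :: "'i \<Rightarrow> 'j \<Rightarrow> real"
  assumes "finite I" "E \<subseteq> I \<times> J" "\<forall>i\<in>I. 0 < lam i" "valid_order I E w ord"
    "\<forall>(i, j)\<in>E. w i j \<le> M" "0 \<le> M"
  shows "\<forall>j. 0 \<le> st j \<and> st j \<le> M \<Longrightarrow>
    0 \<le> ths_V I J lam w x ord n st \<and> ths_V I J lam w x ord n st \<le> card J * M"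
proof (induction n arbitrary: st)
  case 0
  then show ?case by (auto intro: sum_nonneg sum_bounded_above)
next
  case (Suc n)
  define B :: real where "B = card J * M"
  have B0: "0 \<le> B" unfolding B_def using assms(6) by simp
  define L where "L = (\<Sum>k\<in>I. lam k)"
  have tm: "0 \<le> lam i / L * (integral {0..lam i / 2} (\<lambda>\<theta>. ths_V I J lam w x ord n (ths_step w x ord st i \<theta>)) / (lam i / 2))
     \<and> lam i / L * (integral {0..lam i / 2} (\<lambda>\<theta>. ths_V I J lam w x ord n (ths_step w x ord st i \<theta>)) / (lam i / 2)) \<le> lam i / L * B"
    if i: "i \<in> I" for i
  proof -
    have li: "0 < lam i" using assms(3) i by auto
    have L0: "0 < L" unfolding L_def using assms(1,3) i
      by (intro sum_pos2[of _ i]) (auto intro: less_imp_le)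
    have "0 \<le> integral {0..lam i / 2} (\<lambda>\<theta>. ths_V I J lam w x ord n (ths_step w x ord st i \<theta>)) \<and>
      integral {0..lam i / 2} (\<lambda>\<theta>. ths_V I J lam w x ord n (ths_step w x ord st i \<theta>)) \<le> lam i / 2 * B"
    proof (rule integral_bounds)
      fix t
      have "\<forall>j. 0 \<le> ths_step w x ord st i t j \<and> ths_step w x ord st i t j \<le> M"
        by (rule step_inv[OF assms(2,4,5) Suc.prems i])
      from Suc.IH[OF this] show "0 \<le> ths_V I J lam w x ord n (ths_step w x ord st i t) \<and>
        ths_V I J lam w x ord n (ths_step w x ord st i t) \<le> B" unfolding B_def .
    qed (use li in simp)
    then have "0 \<le> integral {0..lam i / 2} (\<lambda>\<theta>. ths_V I J lam w x ord n (ths_step w x ord st i \<theta>)) / (lam i / 2) \<and>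
      integral {0..lam i / 2} (\<lambda>\<theta>. ths_V I J lam w x ord n (ths_step w x ord st i \<theta>)) / (lam i / 2) \<le> B"
      using li by (simp add: divide_le_eq mult.commute)
    then show ?thesis using li L0
      by (intro conjI mult_nonneg_nonneg mult_left_mono) auto
  qed
  have "(\<Sum>i\<in>I. lam i / L * B) \<le> B"
  proof (cases "I = {}")
    case True then show ?thesis using B0 by simp
  next
    case False
    then obtain i where "i \<in> I" by auto
    then have L0: "0 < L" unfolding L_def using assms(1,3)
      by (intro sum_pos2[of _ i]) (auto intro: less_imp_le)
    have "(\<Sum>i\<in>I. lam i / L * B) = (\<Sum>i\<in>I. lam i) / L * B"
      by (simp add: sum_distrib_right sum_divide_distrib)
    also have "\<dots> = B" using L0 unfolding L_def by simp
    finally show ?thesis by simp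
  qed
  define T where "T i = lam i / L * (integral {0..lam i / 2} (\<lambda>\<theta>. ths_V I J lam w x ord n (ths_step w x ord st i \<theta>)) / (lam i / 2))" for i
  have eq: "ths_V I J lam w x ord (Suc n) st = sum T I" by (simp add: T_def L_def)
  have "sum T I \<le> (\<Sum>i\<in>I. lam i / L * B)" using tm unfolding T_def[symmetric]
    by (intro sum_mono) auto
  moreover have "0 \<le> sum T I" using tm unfolding T_def[symmetric]
    by (intro sum_nonneg) auto
  ultimately show ?case using eq \<open>(\<Sum>i\<in>I. lam i / L * B) \<le> B\<close> unfolding B_def by linarith
qed



lemma ineq_final:
  fixes S W Ig l :: real
  assumes "0 \<le> S" "S \<le> l" "0 < l" "0 \<le> W" "0 \<le> Ig" "W \<le> K * S"
    "min (l / 2) S * W \<le> S * Ig"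
  shows "W \<le> 2 * Ig"
proof (cases "S = 0")
  case True then show ?thesis using assms by simp
next
  case False
  then have Sp: "0 < S" using assms by simp
  show ?thesis
  proof (cases "S \<le> l / 2")
    case True
    then have "S * W \<le> S * Ig" using assms(7) by simp
    then have "W \<le> Ig" using Sp by (simp add: mult_le_cancel_left)
    then show ?thesis using assms by simp
  next
    case False
    then have "l / 2 * W \<le> S * Ig" using assms(7) by simp
    also have "\<dots> \<le> l * Ig" using assms by (intro mult_right_mono) auto
    finally show ?thesis using assms(3) by simp
  qed
qed

lemma per_type:
  fixes w x :: "'i \<Rightarrow> 'j \<Rightarrow> real"
  assumes "E \<subseteq> I \<times> J" "\<forall>(i, j) \<in> E. 0 < w i j" "i \<in> I" "0 < lam i"
    and "lp_feasible I J E lam x" and "valid_order I E w ord"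
    and "\<forall>(i, j)\<in>E. w i j \<le> M" and "finite J"
  shows "(\<Sum>j\<in>nbrs E i. w i j * x i j) \<le>
     2 * integral {0..lam i / 2} (\<lambda>\<theta>. ths_V I J lam w x ord 0 (ths_step w x ord (\<lambda>_. 0) i \<theta>))"
proof -
  define st0 :: "'j \<Rightarrow> real" where "st0 = (\<lambda>_. 0)"
  define Li where "Li = ord i st0"
  define v where "v = gain w st0 i"
  have vo: "distinct Li" "set Li = nbrs E i" "sorted_wrt (\<lambda>a b. v b \<le> v a) Li"
  proof -
    have "distinct (ord i st0) \<and> set (ord i st0) = nbrs E i \<and>
        sorted_wrt (\<lambda>a b. gain w st0 i b \<le> gain w st0 i a) (ord i st0)"
      using assms(6) assms(3) unfolding valid_order_def by blast
    then show "distinct Li" "set Li = nbrs E i" "sorted_wrt (\<lambda>a b. v b \<le> v a) Li"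
      unfolding Li_def v_def by auto
  qed
  have nJ: "nbrs E i \<subseteq> J" using assms(1) by (auto simp: nbrs_def)
  have vj: "v j = w i j" if "j \<in> nbrs E i" for j
    using that assms(2) by (auto simp: v_def gain_def st0_def nbrs_def)
  have h: "(\<lambda>\<theta>. ths_V I J lam w x ord 0 (ths_step w x ord st0 i \<theta>)) = FL x i v Li"
  proof
    fix \<theta>
    have sg: "sigma x ord i st0 \<theta> = sel x i Li \<theta>" by (simp add: sigma_def Li_def)
    show "ths_V I J lam w x ord 0 (ths_step w x ord st0 i \<theta>) = FL x i v Li \<theta>"
    proof (cases "sel x i Li \<theta>")
      case None
      then show ?thesis by (simp add: ths_step_def sg FL_def, simp add: st0_def)
    next
      case (Some j)
      have jn: "j \<in> nbrs E i" using sel_in[OF Some] vo(2) by simp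
      then have jJ: "j \<in> J" using nJ by auto
      have "ths_step w x ord st0 i \<theta> = st0(j := max 0 (w i j))"
        using Some by (simp add: ths_step_def sg, simp add: st0_def)
      then have "ths_V I J lam w x ord 0 (ths_step w x ord st0 i \<theta>) = (\<Sum>j'\<in>J. if j' = j then max 0 (w i j) else 0)"
        by (simp add: st0_def fun_upd_def)
      also have "\<dots> = max 0 (w i j)" using jJ assms(8) by (simp add: sum.delta')
      also have "\<dots> = v j" using vj[OF jn] jn assms(2) by (auto simp: nbrs_def)
      finally show ?thesis using Some by (simp add: FL_def)
    qed
  qed
  have feas: "\<forall>(i, j) \<in> E. 0 \<le> x i j" "\<forall>i \<in> I. (\<Sum>j \<in> nbrs E i. x i j) \<le> lam i"
    using assms(5) unfolding lp_feasible_def by blast+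
  have xnn: "\<forall>j\<in>set Li. 0 \<le> x i j" using feas(1) vo(2) by (auto simp: nbrs_def)
  have vnn: "\<forall>j\<in>set Li. 0 \<le> v j" by (auto simp: v_def gain_def)
  obtain Ig where Ig: "(FL x i v Li has_integral Ig) {0..lam i / 2}" "0 \<le> Ig"
    "min (lam i / 2) (\<Sum>j\<leftarrow>Li. x i j) * (\<Sum>j\<leftarrow>Li. v j * x i j) \<le> (\<Sum>j\<leftarrow>Li. x i j) * Ig"
    using FL_integral[where x=x and i=i and L=Li and v=v and a="lam i / 2", OF xnn vnn vo(3)] assms(4) by auto
  have S: "(\<Sum>j\<leftarrow>Li. x i j) = (\<Sum>j\<in>nbrs E i. x i j)"
    using sum.distinct_set_conv_list[OF vo(1), of "x i"] vo(2) by simp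
  have W: "(\<Sum>j\<leftarrow>Li. v j * x i j) = (\<Sum>j\<in>nbrs E i. w i j * x i j)"
  proof -
    have "(\<Sum>j\<leftarrow>Li. v j * x i j) = (\<Sum>j\<in>nbrs E i. v j * x i j)"
      using sum.distinct_set_conv_list[OF vo(1), of "\<lambda>j. v j * x i j"] vo(2) by simp
    also have "\<dots> = (\<Sum>j\<in>nbrs E i. w i j * x i j)" using vj by (intro sum.cong) auto
    finally show ?thesis .
  qed
  have Sl: "(\<Sum>j\<in>nbrs E i. x i j) \<le> lam i" using feas(2) assms(3) by blast
  have vM: "\<forall>j\<in>set Li. v j \<le> M" using vo(2) vj assms(7) by (auto simp: nbrs_def)
  have WM: "(\<Sum>j\<leftarrow>Li. v j * x i j) \<le> M * (\<Sum>j\<leftarrow>Li. x i j)"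
    by (rule W_le[where x=x and i=i and L=Li and v=v and m=M, OF xnn vM])
  have "(\<Sum>j\<leftarrow>Li. v j * x i j) \<le> 2 * Ig"
  proof (rule ineq_final[OF _ _ assms(4) _ Ig(2) WM Ig(3)])
    show "0 \<le> (\<Sum>j\<leftarrow>Li. x i j)" using xnn by (intro sum_list_nonneg) auto
    show "(\<Sum>j\<leftarrow>Li. x i j) \<le> lam i" using S Sl by simp
    show "0 \<le> (\<Sum>j\<leftarrow>Li. v j * x i j)" using xnn vnn by (intro sum_list_nonneg) auto
  qed
  then show ?thesis using W h Ig(1) unfolding st0_def by (simp add: integral_unique)
qed

theorem mainTheorem3:
  fixes I :: "'i set" and J :: "'j set" and E :: "('i \<times> 'j) set"
    and lam :: "'i \<Rightarrow> real" and w x :: "'i \<Rightarrow> 'j \<Rightarrow> real"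
    and ord :: "'i \<Rightarrow> ('j \<Rightarrow> real) \<Rightarrow> 'j list"
  assumes "finite I" and "finite J" and "E \<subseteq> I \<times> J"
    and "\<forall>(i, j) \<in> E. 0 < w i j"
    and "\<forall>i \<in> I. 0 < lam i"
    and "lp_optimal I J E lam w x"
    and "valid_order I E w ord"
  shows "\<exists>D. ((\<lambda>t. lp_value E w x - ths_expected_A I J lam w x ord t)
              has_real_derivative D) (at 0 within {0..1})
           \<and> D \<le> - lp_value E w x"
proof -
  define L where "L = (\<Sum>k\<in>I. lam k)"
  define st0 :: "'j \<Rightarrow> real" where "st0 = (\<lambda>_. 0)"
  define V where "V n = ths_V I J lam w x ord n st0" for n
  define M where "M = (\<Sum>e\<in>E. case e of (i, j) \<Rightarrow> w i j)"
  have finE: "finite E" using finite_subset[OF assms(3)] assms(1,2) by auto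
  have wM: "\<forall>(i, j)\<in>E. w i j \<le> M"
  proof (intro ballI, clarify)
    fix i j assume ij: "(i, j) \<in> E"
    have "(case (i, j) of (i, j) \<Rightarrow> w i j) \<le> M" unfolding M_def
      using ij finE assms(4) by (intro member_le_sum) (auto intro: less_imp_le)
    then show "w i j \<le> M" by simp
  qed
  have M0: "0 \<le> M" unfolding M_def using assms(4) by (intro sum_nonneg) (auto intro: less_imp_le)
  define B :: real where "B = card J * M"
  have Vb: "0 \<le> V n \<and> V n \<le> B" for n
    using V_bound[OF assms(1,3,5,7) wM M0, where st=st0 and n=n and x=x] using M0 unfolding V_def B_def st0_def by simp
  define c where "c n = L ^ n * V n / fact n" for n
  have summ: "summable (\<lambda>n. c n * y ^ n)" for y :: real
  proof (rule summable_comparison_test')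
    show "summable (\<lambda>n. B * (inverse (fact n) * \<bar>L * y\<bar> ^ n))"
      by (intro summable_mult summable_exp)
    show "norm (c n * y ^ n) \<le> B * (inverse (fact n) * \<bar>L * y\<bar> ^ n)" for n
    proof -
      have "norm (c n * y ^ n) = \<bar>L * y\<bar> ^ n * V n / fact n"
        using Vb[of n] by (simp add: c_def abs_mult power_abs power_mult_distrib)
      also have "\<dots> \<le> \<bar>L * y\<bar> ^ n * B / fact n"
        using Vb[of n] by (intro divide_right_mono mult_left_mono) auto
      finally show ?thesis by (simp add: field_simps)
    qed
  qed
  define g where "g t = (\<Sum>n. c n * t ^ n)" for t :: real
  have Aeq: "ths_expected_A I J lam w x ord t = exp (- L * t) * g t" for t
  proof -
    have "ths_expected_A I J lam w x ord t = (\<Sum>n. exp (- L * t) * (c n * t ^ n))"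
      unfolding ths_expected_A_def Let_def L_def[symmetric]
      by (simp add: c_def V_def st0_def power_mult_distrib mult_ac)
    also have "\<dots> = exp (- L * t) * g t" unfolding g_def by (rule suminf_mult[OF summ])
    finally show ?thesis .
  qed
  have dg: "(g has_real_derivative c 1) (at 0)"
    using termdiffs_strong_converges_everywhere[of c 0, OF summ] unfolding g_def
    by (simp add: diffs_def)
  have c0: "c 0 = 0" by (simp add: c_def V_def st0_def)
  have g0: "g 0 = 0" using c0 by (simp add: g_def)
  have de: "((\<lambda>t. exp (- L * t)) has_real_derivative - L) (at 0)"
  proof -
    have l: "((\<lambda>t. - L * t) has_real_derivative - L) (at 0)"
      using DERIV_cmult[OF DERIV_ident, of "- L" 0 UNIV] by simp
    show ?thesis using DERIV_fun_exp[OF l] by simp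
  qed
  have d0: "((\<lambda>t. exp (- L * t) * g t) has_real_derivative c 1) (at 0)"
    using DERIV_mult[OF de dg] g0 by simp
  have eqf: "(\<lambda>t. ths_expected_A I J lam w x ord t) = (\<lambda>t. exp (- L * t) * g t)"
    using Aeq by (rule ext)
  have dA: "((\<lambda>t. ths_expected_A I J lam w x ord t) has_real_derivative c 1) (at 0)"
    by (subst eqf) (rule d0)
  have "((\<lambda>t. lp_value E w x - ths_expected_A I J lam w x ord t) has_real_derivative (0 - c 1)) (at 0)"
    using DERIV_diff[OF DERIV_const dA] .
  then have "((\<lambda>t. lp_value E w x - ths_expected_A I J lam w x ord t) has_real_derivative (- c 1)) (at 0)"
    by simp
  then have dF: "((\<lambda>t. lp_value E w x - ths_expected_A I J lam w x ord t) has_real_derivative (- c 1)) (at 0 within {0..1})"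
    by (rule has_field_derivative_at_within)
  have key: "lp_value E w x \<le> c 1"
  proof (cases "I = {}")
    case True
    then have "E = {}" using assms(3) by auto
    then show ?thesis by (simp add: lp_value_def c_def L_def True)
  next
    case False
    then obtain i0 where "i0 \<in> I" by auto
    then have L0: "0 < L" unfolding L_def using assms(1,5)
      by (intro sum_pos2[of _ i0]) (auto intro: less_imp_le)
    define X where "X i = integral {0..lam i / 2} (\<lambda>\<theta>. ths_V I J lam w x ord 0 (ths_step w x ord st0 i \<theta>))" for i
    have feas: "lp_feasible I J E lam x" using assms(6) unfolding lp_optimal_def by (rule conjunct1)
    have c1: "c 1 = (\<Sum>i\<in>I. 2 * X i)"
    proof -
      have "c 1 = L * (\<Sum>i\<in>I. lam i / L * (X i / (lam i / 2)))"
        by (simp add: c_def V_def X_def L_def)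
      also have "\<dots> = (\<Sum>i\<in>I. L * (lam i / L * (X i / (lam i / 2))))" by (rule sum_distrib_left)
      also have "\<dots> = (\<Sum>i\<in>I. 2 * X i)"
      proof (rule sum.cong)
        fix i assume "i \<in> I"
        then have "0 < lam i" using assms(5) by auto
        then show "L * (lam i / L * (X i / (lam i / 2))) = 2 * X i" using L0 by (simp add: field_simps)
      qed simp
      finally show ?thesis .
    qed
    have opt: "lp_value E w x = (\<Sum>i\<in>I. \<Sum>j\<in>nbrs E i. w i j * x i j)"
    proof -
      have ES: "E = Sigma I (nbrs E)" using assms(3) by (auto simp: nbrs_def)
      have fn: "\<forall>i\<in>I. finite (nbrs E i)" using assms(2,3)
        by (auto intro: finite_subset[of _ J] simp: nbrs_def)
      show ?thesis unfolding lp_value_def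
        by (subst ES, subst sum.Sigma[OF assms(1) fn]) simp
    qed
    have "(\<Sum>i\<in>I. \<Sum>j\<in>nbrs E i. w i j * x i j) \<le> (\<Sum>i\<in>I. 2 * X i)"
    proof (rule sum_mono)
      fix i assume i: "i \<in> I"
      show "(\<Sum>j\<in>nbrs E i. w i j * x i j) \<le> 2 * X i"
        unfolding X_def st0_def
        by (rule per_type[OF assms(3,4) i _ feas assms(7) wM assms(2)]) (use i assms(5) in auto)
    qed
    then show ?thesis using opt c1 by simp
  qed
  show ?thesis using dF key by (intro exI[of _ "- c 1"]) simp
qed

end
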